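(* Let $\mathcal{U}=\{u_1,\ldots,u_M\}\subset\mathbb{R}\setminus\{0\}$ be a fixed finite set of $M\ge 1$ distinct nonzero reals, $u_{\min}=\min_{m}|u_m|$, and let $\sigma^2>0$ be fixed. For integers $N>k\ge 1$, let $x$ be uniformly distributed on $\mathcal{X}_k^N(\mathcal{U})$ and $y=x+\omega$ with $\omega\sim\mathcal{N}(0,\sigma_{N/k}^2 I_N)$ independent of $x$, where $\sigma_{N/k}^2=\sigma^2/\log(N/k)$. Let $\hat{x}_{\mathrm{ML}}\in\mathcal{X}_k^N(\mathcal{U})$ be the maximum likelihood estimator of $x$ based on $y$, i.e. $\hat{x}_{\mathrm{ML}}\in\operatorname{argmax}_{x'\in\mathcal{X}_k^N(\mathcal{U})}p(y\mid x')$. If $\sigma^2<u_{\min}^2/2$, then $k^{-1}\mathbb{E}[\|x-\hat{x}_{\mathrm{ML}}\|_2^2]\to 0$ as $k,N\to\infty$ with $\log k/\log N\to\gamma$ for some $\gamma\in[0,1)$.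
   Context: For $v\in\mathbb{R}^N$, $\mathcal{S}_v=\{n\in\{1,\ldots,N\}: v_n\neq 0\}$ is its support. $\mathcal{X}_k^N(\mathcal{U})$ denotes the set of vectors $x\in\mathbb{R}^N$ with $|\mathcal{S}_x|=k$ and $x_n\in\mathcal{U}$ for all $n\in\mathcal{S}_x$. Here $p(y\mid x')$ is the Gaussian density $(2\pi\sigma_{N/k}^2)^{-N/2}\exp(-\|y-x'\|_2^2/(2\sigma_{N/k}^2))$. The expectation is over $x$ and $\omega$. *)

theory Defs
  imports "HOL-Probability.Probability"
begin

text \<open>Vectors in R^N are represented as functions nat => real, coordinates 0..N-1,
  required to vanish outside {..<N}.\<close>

definition sqnorm :: "nat \<Rightarrow> (nat \<Rightarrow> real) \<Rightarrow> real" where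
  "sqnorm N v = (\<Sum>n<N. (v n)\<^sup>2)"

definition supp :: "nat \<Rightarrow> (nat \<Rightarrow> real) \<Rightarrow> nat set" where
  "supp N v = {n \<in> {..<N}. v n \<noteq> 0}"

definition Xset :: "real set \<Rightarrow> nat \<Rightarrow> nat \<Rightarrow> (nat \<Rightarrow> real) set" where
  "Xset U k N = {x. (\<forall>n\<ge>N. x n = 0) \<and> card (supp N x) = k \<and> (\<forall>n\<in>supp N x. x n \<in> U)}"

definition noise_var :: "real \<Rightarrow> nat \<Rightarrow> nat \<Rightarrow> real" where
  "noise_var s2 k N = s2 / ln (real N / real k)"

definition lik :: "real \<Rightarrow> nat \<Rightarrow> (nat \<Rightarrow> real) \<Rightarrow> (nat \<Rightarrow> real) \<Rightarrow> real" where
  "lik v N y x' = (2 * pi * v) powr (- real N / 2) * exp (- sqnorm N (\<lambda>n. y n - x' n) / (2 * v))"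

definition gauss_noise :: "real \<Rightarrow> nat \<Rightarrow> (nat \<Rightarrow> real) measure" where
  "gauss_noise v N = PiM {..<N} (\<lambda>_. density lborel (normal_density 0 (sqrt v)))"

definition mse :: "real set \<Rightarrow> real \<Rightarrow> nat \<Rightarrow> nat \<Rightarrow> ((nat \<Rightarrow> real) \<Rightarrow> (nat \<Rightarrow> real)) \<Rightarrow> real" where
  "mse U s2 k N est =
     (\<Sum>x\<in>Xset U k N. \<integral>\<omega>. sqnorm N (\<lambda>n. x n - est (\<lambda>i. x i + \<omega> i) n)
        \<partial>(gauss_noise (noise_var s2 k N) N)) / real (card (Xset U k N))"

definition is_ML_est :: "real set \<Rightarrow> real \<Rightarrow> nat \<Rightarrow> nat \<Rightarrow> ((nat \<Rightarrow> real) \<Rightarrow> (nat \<Rightarrow> real)) \<Rightarrow> bool" where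
  "is_ML_est U s2 k N est \<longleftrightarrow>
     (\<forall>y. est y \<in> Xset U k N \<and>
          (\<forall>x'\<in>Xset U k N. lik (noise_var s2 k N) N y x' \<le> lik (noise_var s2 k N) N y (est y)))"

end

theory Submission
  imports Defs
begin


lemma comp_integral:
  fixes h :: "real \<Rightarrow> real"
  assumes M: "prob_space M" and i: "i \<in> I" and h: "h \<in> borel_measurable M"
  shows "integral\<^sup>L (PiM I (\<lambda>_. M)) (\<lambda>\<omega>. h (\<omega> i)) = integral\<^sup>L M h"
    and "integrable (PiM I (\<lambda>_. M)) (\<lambda>\<omega>. h (\<omega> i)) = integrable M h"
proof -
  have d: "distr (PiM I (\<lambda>_. M)) M (\<lambda>\<omega>. \<omega> i) = M"
    using distr_PiM_component[of I "\<lambda>_. M" i] M i by simp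
  have m: "(\<lambda>\<omega>. \<omega> i) \<in> measurable (PiM I (\<lambda>_. M)) M"
    using i by (rule measurable_component_singleton)
  show "integral\<^sup>L (PiM I (\<lambda>_. M)) (\<lambda>\<omega>. h (\<omega> i)) = integral\<^sup>L M h"
    using integral_distr[OF m, of h] h d by simp
  show "integrable (PiM I (\<lambda>_. M)) (\<lambda>\<omega>. h (\<omega> i)) = integrable M h"
    using integrable_distr_eq[OF m, of h] h d by simp
qed

lemma nd_exp_identity:
  fixes v l z :: real
  assumes v: "v > 0" and l: "2 * l * v < 1"
  shows "normal_density 0 (sqrt v) z * exp (l * z\<^sup>2) =
     (1 / sqrt (1 - 2 * l * v)) * normal_density 0 (sqrt (v / (1 - 2 * l * v))) z"
proof -
  define c where "c = 1 - 2 * l * v"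
  have c: "c > 0" using l c_def by simp
  have "normal_density 0 (sqrt v) z * exp (l * z\<^sup>2) = 1 / sqrt (2 * pi * v) * exp (- z\<^sup>2 / (2 * v) + l * z\<^sup>2)"
  proof -
    have "exp (- z\<^sup>2 / (2 * v)) * exp (l * z\<^sup>2) = exp (- z\<^sup>2 / (2 * v) + l * z\<^sup>2)"
      by (rule exp_add[symmetric])
    thus ?thesis using v by (simp add: normal_density_def)
  qed
  also have "- z\<^sup>2 / (2 * v) + l * z\<^sup>2 = - z\<^sup>2 / (2 * (v / c))"
    using v c by (simp add: c_def field_simps)
  also have "1 / sqrt (2 * pi * v) = (1 / sqrt c) * (1 / sqrt (2 * pi * (v / c)))"
    using v c by (simp add: real_sqrt_mult real_sqrt_divide field_simps)
  finally show ?thesis using v c by (simp add: normal_density_def c_def)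
qed

lemma gauss_exp_moment:
  fixes v l :: real
  assumes v: "v > 0" and l: "2 * l * v < 1"
  shows "integrable lborel (\<lambda>z. normal_density 0 (sqrt v) z * exp (l * z\<^sup>2))"
    and "(\<integral>z. normal_density 0 (sqrt v) z * exp (l * z\<^sup>2) \<partial>lborel) = 1 / sqrt (1 - 2 * l * v)"
proof -
  have e: "(\<lambda>z. normal_density 0 (sqrt v) z * exp (l * z\<^sup>2)) =
     (\<lambda>z. (1 / sqrt (1 - 2 * l * v)) * normal_density 0 (sqrt (v / (1 - 2 * l * v))) z)"
    using nd_exp_identity[OF v l] by auto
  show "integrable lborel (\<lambda>z. normal_density 0 (sqrt v) z * exp (l * z\<^sup>2))"
    unfolding e using v l by (intro integrable_mult_right integrable_normal_density) simp
  show "(\<integral>z. normal_density 0 (sqrt v) z * exp (l * z\<^sup>2) \<partial>lborel) = 1 / sqrt (1 - 2 * l * v)"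
  proof -
    have p: "0 < sqrt (v / (1 - 2 * l * v))" using v l by simp
    show ?thesis unfolding e by (simp add: integral_normal_density[OF p])
  qed
qed

definition psi :: "real \<Rightarrow> real \<Rightarrow> real" where
  "psi \<tau> w = (if \<tau> < \<bar>w\<bar> then exp (w\<^sup>2) else 0)"

lemma psi_nonneg: "0 \<le> psi \<tau> w" by (simp add: psi_def)

lemma psi_meas[measurable]: "psi \<tau> \<in> borel_measurable borel"
  unfolding psi_def by measurable

lemma psi_bound:
  fixes v \<theta> \<tau> :: real
  assumes v: "v > 0" and th: "0 < \<theta>" "\<theta> + 2 * v < 1" and tau: "0 \<le> \<tau>"
  shows "integrable (density lborel (normal_density 0 (sqrt v))) (psi \<tau>)"
    and "integral\<^sup>L (density lborel (normal_density 0 (sqrt v))) (psi \<tau>)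
           \<le> exp (- \<theta> * \<tau>\<^sup>2 / (2 * v)) / sqrt (1 - \<theta> - 2 * v)"
proof -
  define l where "l = 1 + \<theta> / (2 * v)"
  have l0: "2 * l * v = 2 * v + \<theta>" using v by (simp add: l_def field_simps)
  have l: "2 * l * v < 1" using l0 th by simp
  have l2: "1 - 2 * l * v = 1 - \<theta> - 2 * v" using l0 by simp
  define g where "g z = exp (- \<theta> * \<tau>\<^sup>2 / (2 * v)) * (normal_density 0 (sqrt v) z * exp (l * z\<^sup>2))" for z
  have gi: "integrable lborel g" unfolding g_def using gauss_exp_moment(1)[OF v l] by simp
  have gI: "integral\<^sup>L lborel g = exp (- \<theta> * \<tau>\<^sup>2 / (2 * v)) / sqrt (1 - \<theta> - 2 * v)"
    unfolding g_def using gauss_exp_moment(2)[OF v l] l2 by simp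
  have pw: "normal_density 0 (sqrt v) z * psi \<tau> z \<le> g z" for z
  proof (cases "\<tau> < \<bar>z\<bar>")
    case True
    have "z\<^sup>2 \<le> - \<theta> * \<tau>\<^sup>2 / (2 * v) + l * z\<^sup>2"
    proof -
      have "\<tau>\<^sup>2 \<le> z\<^sup>2"
        using True tau by (metis abs_le_square_iff abs_of_nonneg less_imp_le)
      hence "0 \<le> \<theta> * (z\<^sup>2 - \<tau>\<^sup>2) / (2 * v)" using v th by simp
      moreover have "- \<theta> * \<tau>\<^sup>2 / (2 * v) + l * z\<^sup>2 = z\<^sup>2 + \<theta> * (z\<^sup>2 - \<tau>\<^sup>2) / (2 * v)"
        using v by (simp add: l_def field_simps)
      ultimately show ?thesis by linarith
    qed
    hence "exp (z\<^sup>2) \<le> exp (- \<theta> * \<tau>\<^sup>2 / (2 * v)) * exp (l * z\<^sup>2)"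
      by (simp add: exp_add[symmetric])
    thus ?thesis using True unfolding g_def psi_def
      by (simp add: mult_left_mono mult.left_commute)
  next
    case False
    thus ?thesis unfolding g_def psi_def by simp
  qed
  have pi: "integrable lborel (\<lambda>z. normal_density 0 (sqrt v) z * psi \<tau> z)"
    by (rule Bochner_Integration.integrable_bound[OF gi]) (use pw psi_nonneg in \<open>auto intro!: AE_I2 order_trans[OF pw abs_ge_self]\<close>)
  show "integrable (density lborel (normal_density 0 (sqrt v))) (psi \<tau>)"
    by (subst integrable_density) (use pi in auto)
  have "integral\<^sup>L (density lborel (normal_density 0 (sqrt v))) (psi \<tau>)
       = integral\<^sup>L lborel (\<lambda>z. normal_density 0 (sqrt v) z * psi \<tau> z)"
    by (subst integral_density) auto
  also have "\<dots> \<le> integral\<^sup>L lborel g" by (rule integral_mono[OF pi gi pw])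
  finally show "integral\<^sup>L (density lborel (normal_density 0 (sqrt v))) (psi \<tau>)
           \<le> exp (- \<theta> * \<tau>\<^sup>2 / (2 * v)) / sqrt (1 - \<theta> - 2 * v)" using gI by simp
qed



lemma coord_lower:
  fixes a b w d D \<delta> t r :: real
  assumes a: "a \<noteq> 0 \<Longrightarrow> a \<in> U" and b: "b \<noteq> 0 \<Longrightarrow> b \<in> U"
    and dpos: "0 < d" and dU: "\<forall>u\<in>U. d \<le> \<bar>u\<bar>"
    and dl: "0 < \<delta>" "\<forall>u\<in>U. \<forall>u'\<in>U. u \<noteq> u' \<longrightarrow> \<delta> \<le> \<bar>u - u'\<bar>"
    and r: "0 \<le> r" "r \<le> \<delta> / 4" and t: "0 \<le> t" "t + r < d"
  shows "(b - a)\<^sup>2 - 2 * (b - a) * w \<ge>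
      (if a = 0 \<and> b \<noteq> 0 then d\<^sup>2 - 2 * d * t else 0)
    + (if a \<noteq> 0 \<and> b = 0 then d\<^sup>2 - 2 * d * r else 0)
    + (if a \<noteq> 0 \<and> b \<noteq> 0 \<and> a \<noteq> b then \<delta>\<^sup>2 / 2 else 0)
    - (d\<^sup>2 + \<delta>\<^sup>2 + 1) * psi (if a = 0 then t else r) w"
proof -
  define K where "K = d\<^sup>2 + \<delta>\<^sup>2 + 1"
  define \<tau> where "\<tau> = (if a = 0 then t else r)"
  define R where "R = (if a = 0 \<and> b \<noteq> 0 then d\<^sup>2 - 2 * d * t else 0)
    + (if a \<noteq> 0 \<and> b = 0 then d\<^sup>2 - 2 * d * r else 0)
    + (if a \<noteq> 0 \<and> b \<noteq> 0 \<and> a \<noteq> b then \<delta>\<^sup>2 / 2 else 0)"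
  have h: "0 \<le> d * t" "0 \<le> d * r" "0 \<le> \<delta>\<^sup>2" using dpos t r by auto
  have RK: "R \<le> K" unfolding R_def K_def using h
    by (simp split: if_split; linarith)
  have low: "(b - a)\<^sup>2 - 2 * (b - a) * w \<ge> - w\<^sup>2"
  proof -
    have "(b - a)\<^sup>2 - 2 * (b - a) * w = (b - a - w)\<^sup>2 - w\<^sup>2" by (simp add: power2_eq_square algebra_simps)
    thus ?thesis by simp
  qed
  show ?thesis
  proof (cases "\<tau> < \<bar>w\<bar>")
    case True
    have "psi \<tau> w = exp (w\<^sup>2)" using True by (simp add: psi_def)
    moreover have "1 + w\<^sup>2 \<le> exp (w\<^sup>2)" using exp_ge_add_one_self[of "w\<^sup>2"] by simp
    moreover have "K \<ge> 1" unfolding K_def by simp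
    ultimately have "K * psi \<tau> w \<ge> K + w\<^sup>2"
    proof -
      assume p: "psi \<tau> w = exp (w\<^sup>2)" and e: "1 + w\<^sup>2 \<le> exp (w\<^sup>2)" and K1: "K \<ge> 1"
      have "K * (1 + w\<^sup>2) \<le> K * exp (w\<^sup>2)" using e K1 by (intro mult_left_mono) auto
      moreover have "1 * w\<^sup>2 \<le> K * w\<^sup>2" using K1 by (intro mult_right_mono) auto
      ultimately show ?thesis using p by (simp add: algebra_simps)
    qed
    thus ?thesis using low RK unfolding R_def K_def \<tau>_def by linarith
  next
    case False
    hence wt: "\<bar>w\<bar> \<le> \<tau>" by simp
    have ps: "psi \<tau> w = 0" using False by (simp add: psi_def)
    have "(b - a)\<^sup>2 - 2 * (b - a) * w \<ge> R"
    proof -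
      have key: "\<bar>(b - a) * w\<bar> \<le> \<bar>b - a\<bar> * \<tau>"
        by (simp add: abs_mult mult_left_mono wt)
      have sq: "(b - a)\<^sup>2 = \<bar>b - a\<bar>\<^sup>2" by simp
      have ab: "(b - a) * w \<le> \<bar>(b - a) * w\<bar>" by simp
      consider "a = 0 \<and> b \<noteq> 0" | "a \<noteq> 0 \<and> b = 0" | "a \<noteq> 0 \<and> b \<noteq> 0 \<and> a \<noteq> b" | "a = b"
        by blast
      thus ?thesis
      proof cases
        case 1
        hence e: "\<bar>b - a\<bar> \<ge> d" "\<tau> = t" using b dU by (auto simp: \<tau>_def)
        have "(\<bar>b - a\<bar> - d) * (\<bar>b - a\<bar> + d - 2 * t) \<ge> 0"
          using e t r by (intro mult_nonneg_nonneg) auto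
        hence "\<bar>b - a\<bar>\<^sup>2 - 2 * \<bar>b - a\<bar> * t \<ge> d\<^sup>2 - 2 * d * t"
          by (simp add: power2_eq_square algebra_simps)
        moreover have "R = d\<^sup>2 - 2 * d * t" using 1 by (simp add: R_def)
        ultimately show ?thesis using key e sq ab by ((simp only:)?; linarith)
      next
        case 2
        hence e: "\<bar>b - a\<bar> \<ge> d" "\<tau> = r" using a dU by (auto simp: \<tau>_def)
        have "(\<bar>b - a\<bar> - d) * (\<bar>b - a\<bar> + d - 2 * r) \<ge> 0"
          using e t r by (intro mult_nonneg_nonneg) auto
        hence "\<bar>b - a\<bar>\<^sup>2 - 2 * \<bar>b - a\<bar> * r \<ge> d\<^sup>2 - 2 * d * r"
          by (simp add: power2_eq_square algebra_simps)
        moreover have "R = d\<^sup>2 - 2 * d * r" using 2 by (simp add: R_def)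
        ultimately show ?thesis using key e sq ab by ((simp only:)?; linarith)
      next
        case 3
        hence e: "\<bar>b - a\<bar> \<ge> \<delta>" "\<tau> = r" using a b dl by (auto simp: \<tau>_def)
        have "\<bar>b - a\<bar> * (\<bar>b - a\<bar> - 2 * r) \<ge> \<delta> * (\<delta> / 2)"
          using e r dl by (intro mult_mono) auto
        hence "\<bar>b - a\<bar>\<^sup>2 - 2 * \<bar>b - a\<bar> * r \<ge> \<delta>\<^sup>2 / 2"
          by (simp add: power2_eq_square algebra_simps)
        moreover have "R = \<delta>\<^sup>2 / 2" using 3 by (simp add: R_def)
        ultimately show ?thesis using key e sq ab by ((simp only:)?; linarith)
      next
        case 4
        thus ?thesis unfolding R_def by simp
      qed
    qed
    thus ?thesis using ps unfolding R_def \<tau>_def by simp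
  qed
qed

lemma coord_upper:
  fixes a b D :: real
  assumes a: "a \<noteq> 0 \<Longrightarrow> a \<in> U" and b: "b \<noteq> 0 \<Longrightarrow> b \<in> U"
    and DU: "\<forall>u\<in>U. \<bar>u\<bar> \<le> D"
  shows "(a - b)\<^sup>2 \<le> (if a = 0 \<and> b \<noteq> 0 then D\<^sup>2 else 0)
    + (if a \<noteq> 0 \<and> b = 0 then D\<^sup>2 else 0)
    + (if a \<noteq> 0 \<and> b \<noteq> 0 \<and> a \<noteq> b then 4 * D\<^sup>2 else 0)"
proof -
  consider "a = 0 \<and> b \<noteq> 0" | "a \<noteq> 0 \<and> b = 0" | "a \<noteq> 0 \<and> b \<noteq> 0 \<and> a \<noteq> b" | "a = b"
    by blast
  thus ?thesis
  proof cases
    case 1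
    hence "\<bar>b\<bar> \<le> D" using b DU by auto
    hence "b\<^sup>2 \<le> D\<^sup>2" by (metis abs_ge_zero order_trans power2_abs power_mono)
    thus ?thesis using 1 by simp
  next
    case 2
    hence "\<bar>a\<bar> \<le> D" using a DU by auto
    hence "a\<^sup>2 \<le> D\<^sup>2" by (metis abs_ge_zero order_trans power2_abs power_mono)
    thus ?thesis using 2 by simp
  next
    case 3
    hence "\<bar>a\<bar> \<le> D" "\<bar>b\<bar> \<le> D" using a b DU by auto
    hence "\<bar>a - b\<bar> \<le> 2 * D" by linarith
    hence "\<bar>a - b\<bar>\<^sup>2 \<le> (2 * D)\<^sup>2" by (metis abs_ge_zero power_mono)
    thus ?thesis using 3 by (simp add: power_mult_distrib)
  next
    case 4
    thus ?thesis by simp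
  qed
qed



lemma Xset_mem: "x \<in> Xset U k N \<Longrightarrow> n < N \<Longrightarrow> x n \<noteq> 0 \<Longrightarrow> x n \<in> U"
  unfolding Xset_def supp_def by auto

lemma Xset_card: "x \<in> Xset U k N \<Longrightarrow> card {n\<in>{..<N}. x n \<noteq> 0} = k"
  unfolding Xset_def supp_def by auto

lemma sum_if_card: "(\<Sum>n<(N::nat). if P n then (c::real) else 0) = c * real (card {n\<in>{..<N}. P n})"
  using sum.inter_filter[OF finite_lessThan[of N], of "\<lambda>_. c" P] by (simp add: mult.commute)

lemma det_bound:
  fixes d D \<delta> t r :: real and x z w :: "nat \<Rightarrow> real"
  assumes dpos: "0 < d" and dU: "\<forall>u\<in>U. d \<le> \<bar>u\<bar>" and DU: "\<forall>u\<in>U. \<bar>u\<bar> \<le> D"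
    and dl: "0 < \<delta>" "\<forall>u\<in>U. \<forall>u'\<in>U. u \<noteq> u' \<longrightarrow> \<delta> \<le> \<bar>u - u'\<bar>"
    and r: "0 \<le> r" "r \<le> \<delta> / 4" and t: "0 \<le> t" "t + r < d"
    and x: "x \<in> Xset U k N" and z: "z \<in> Xset U k N"
    and ml: "(\<Sum>n<N. (x n + w n - z n)\<^sup>2) \<le> (\<Sum>n<N. (w n)\<^sup>2)"
  shows "(\<Sum>n<N. (x n - z n)\<^sup>2) \<le> (d\<^sup>2 + \<delta>\<^sup>2 + 1) * (2 * D\<^sup>2 / (2 * d * (d - t - r)) + 8 * D\<^sup>2 / \<delta>\<^sup>2)
        * (\<Sum>n<N. psi (if x n = 0 then t else r) (w n))"
proof -
  define K where "K = d\<^sup>2 + \<delta>\<^sup>2 + 1"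
  define S where "S = (\<Sum>n<N. psi (if x n = 0 then t else r) (w n))"
  define A where "A = d\<^sup>2 - 2 * d * t"
  define B where "B = d\<^sup>2 - 2 * d * r"
  define m1 where "m1 = real (card {n\<in>{..<N}. x n = 0 \<and> z n \<noteq> 0})"
  define m2 where "m2 = real (card {n\<in>{..<N}. x n \<noteq> 0 \<and> z n = 0})"
  define nv where "nv = real (card {n\<in>{..<N}. x n \<noteq> 0 \<and> z n \<noteq> 0 \<and> x n \<noteq> z n})"
  have m12: "m1 = m2"
  proof -
    let ?X = "{n\<in>{..<N}. x n \<noteq> 0}" and ?Z = "{n\<in>{..<N}. z n \<noteq> 0}"
    have e1: "{n\<in>{..<N}. x n = 0 \<and> z n \<noteq> 0} = ?Z - ?X" by auto
    have e2: "{n\<in>{..<N}. x n \<noteq> 0 \<and> z n = 0} = ?X - ?Z" by auto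
    have "card (?Z - ?X) = card ?Z - card (?Z \<inter> ?X)" by (rule card_Diff_subset_Int) auto
    moreover have "card (?X - ?Z) = card ?X - card (?X \<inter> ?Z)" by (rule card_Diff_subset_Int) auto
    moreover have "card ?X = k" "card ?Z = k" using Xset_card[OF x] Xset_card[OF z] by auto
    moreover have "?Z \<inter> ?X = ?X \<inter> ?Z" by auto
    ultimately show ?thesis unfolding m1_def m2_def e1 e2 by simp
  qed
  have lowc: "(z n - x n)\<^sup>2 - 2 * (z n - x n) * w n \<ge>
      (if x n = 0 \<and> z n \<noteq> 0 then A else 0)
    + (if x n \<noteq> 0 \<and> z n = 0 then B else 0)
    + (if x n \<noteq> 0 \<and> z n \<noteq> 0 \<and> x n \<noteq> z n then \<delta>\<^sup>2 / 2 else 0)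
    - K * psi (if x n = 0 then t else r) (w n)" if n: "n < N" for n
    unfolding A_def B_def K_def
    by (rule coord_lower[where U=U]) (use Xset_mem[OF x n] Xset_mem[OF z n] assms in auto)
  have upc: "(x n - z n)\<^sup>2 \<le> (if x n = 0 \<and> z n \<noteq> 0 then D\<^sup>2 else 0)
    + (if x n \<noteq> 0 \<and> z n = 0 then D\<^sup>2 else 0)
    + (if x n \<noteq> 0 \<and> z n \<noteq> 0 \<and> x n \<noteq> z n then 4 * D\<^sup>2 else 0)" if n: "n < N" for n
    by (rule coord_upper[where U=U]) (use Xset_mem[OF x n] Xset_mem[OF z n] assms in auto)
  have Tsum: "(\<Sum>n<N. (z n - x n)\<^sup>2 - 2 * (z n - x n) * w n) \<le> 0"
  proof -
    have "(\<Sum>n<N. (z n - x n)\<^sup>2 - 2 * (z n - x n) * w n) = (\<Sum>n<N. (x n + w n - z n)\<^sup>2 - (w n)\<^sup>2)"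
      by (rule sum.cong) (auto simp: power2_eq_square algebra_simps)
    also have "\<dots> = (\<Sum>n<N. (x n + w n - z n)\<^sup>2) - (\<Sum>n<N. (w n)\<^sup>2)" by (simp add: sum_subtractf)
    finally show ?thesis using ml by simp
  qed
  have L: "m1 * A + m2 * B + nv * (\<delta>\<^sup>2 / 2) - K * S \<le> 0"
  proof -
    have "(\<Sum>n<N. (if x n = 0 \<and> z n \<noteq> 0 then A else 0)
    + (if x n \<noteq> 0 \<and> z n = 0 then B else 0)
    + (if x n \<noteq> 0 \<and> z n \<noteq> 0 \<and> x n \<noteq> z n then \<delta>\<^sup>2 / 2 else 0)
    - K * psi (if x n = 0 then t else r) (w n)) \<le> (\<Sum>n<N. (z n - x n)\<^sup>2 - 2 * (z n - x n) * w n)"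
      by (rule sum_mono) (use lowc in auto)
    moreover have "(\<Sum>n<N. (if x n = 0 \<and> z n \<noteq> 0 then A else 0)
    + (if x n \<noteq> 0 \<and> z n = 0 then B else 0)
    + (if x n \<noteq> 0 \<and> z n \<noteq> 0 \<and> x n \<noteq> z n then \<delta>\<^sup>2 / 2 else 0)
    - K * psi (if x n = 0 then t else r) (w n)) = m1 * A + m2 * B + nv * (\<delta>\<^sup>2 / 2) - K * S"
      unfolding m1_def m2_def nv_def S_def
      by (simp only: sum_subtractf sum.distrib sum_if_card sum_distrib_left[symmetric]) (simp add: mult.commute)
    ultimately show ?thesis using Tsum by linarith
  qed
  have Up: "(\<Sum>n<N. (x n - z n)\<^sup>2) \<le> m1 * D\<^sup>2 + m2 * D\<^sup>2 + nv * (4 * D\<^sup>2)"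
  proof -
    have "(\<Sum>n<N. (x n - z n)\<^sup>2) \<le> (\<Sum>n<N. (if x n = 0 \<and> z n \<noteq> 0 then D\<^sup>2 else 0)
    + (if x n \<noteq> 0 \<and> z n = 0 then D\<^sup>2 else 0)
    + (if x n \<noteq> 0 \<and> z n \<noteq> 0 \<and> x n \<noteq> z n then 4 * D\<^sup>2 else 0))"
      by (rule sum_mono) (use upc in auto)
    also have "\<dots> = m1 * D\<^sup>2 + m2 * D\<^sup>2 + nv * (4 * D\<^sup>2)"
      unfolding m1_def m2_def nv_def
      by (simp only: sum.distrib sum_if_card) (simp add: mult.commute)
    finally show ?thesis .
  qed
  define AB where "AB = 2 * d * (d - t - r)"
  have ABpos: "AB > 0" unfolding AB_def using dpos t by simp
  have ABe: "A + B = AB" unfolding A_def B_def AB_def by (simp add: power2_eq_square algebra_simps)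
  have m0: "m1 \<ge> 0" "nv \<ge> 0" unfolding m1_def nv_def by auto
  have dd: "\<delta>\<^sup>2 > 0" using dl by simp
  have L2: "m1 * AB + nv * (\<delta>\<^sup>2 / 2) \<le> K * S" unfolding ABe[symmetric] using L m12 by (simp add: algebra_simps)
  have mb: "m1 \<le> K * S / AB"
  proof -
    have "m1 * AB \<le> K * S" using L2 m0 dd by (smt (verit) divide_nonneg_nonneg mult_nonneg_nonneg)
    thus ?thesis using ABpos by (simp add: field_simps)
  qed
  have nb: "nv \<le> 2 * K * S / \<delta>\<^sup>2"
  proof -
    have "nv * (\<delta>\<^sup>2 / 2) \<le> K * S" using L2 m0 ABpos by (smt (verit) mult_nonneg_nonneg)
    thus ?thesis using dd by (simp add: field_simps)
  qed
  have "(\<Sum>n<N. (x n - z n)\<^sup>2) \<le> 2 * D\<^sup>2 * m1 + 4 * D\<^sup>2 * nv" using Up m12 by (simp add: algebra_simps)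
  also have "\<dots> \<le> 2 * D\<^sup>2 * (K * S / AB) + 4 * D\<^sup>2 * (2 * K * S / \<delta>\<^sup>2)"
    by (intro add_mono mult_left_mono mb nb) auto
  also have "\<dots> = K * (2 * D\<^sup>2 / AB + 8 * D\<^sup>2 / \<delta>\<^sup>2) * S"
    by (simp add: field_simps)
  finally show ?thesis unfolding K_def S_def AB_def .
qed



lemma lik_le_imp:
  assumes v: "v > 0" and le: "lik v N y x' \<le> lik v N y z"
  shows "sqnorm N (\<lambda>n. y n - z n) \<le> sqnorm N (\<lambda>n. y n - x' n)"
proof -
  have c: "(2 * pi * v) powr (- real N / 2) > 0" using v by simp
  have "exp (- sqnorm N (\<lambda>n. y n - x' n) / (2 * v)) \<le> exp (- sqnorm N (\<lambda>n. y n - z n) / (2 * v))"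
    using le c unfolding lik_def by simp
  hence "- sqnorm N (\<lambda>n. y n - x' n) / (2 * v) \<le> - sqnorm N (\<lambda>n. y n - z n) / (2 * v)" by simp
  thus ?thesis using v by (simp add: divide_le_cancel)
qed

lemma psi_meas_M[measurable]: "psi \<tau> \<in> borel_measurable (density lborel f)"
  by simp

lemma mse_bound:
  fixes d D \<delta> t r :: real
  assumes dpos: "0 < d" and dU: "\<forall>u\<in>U. d \<le> \<bar>u\<bar>" and DU: "\<forall>u\<in>U. \<bar>u\<bar> \<le> D"
    and dl: "0 < \<delta>" "\<forall>u\<in>U. \<forall>u'\<in>U. u \<noteq> u' \<longrightarrow> \<delta> \<le> \<bar>u - u'\<bar>"
    and r: "0 \<le> r" "r \<le> \<delta> / 4" and t: "0 \<le> t" "t + r < d"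
    and v: "0 < noise_var s2 k N" "4 * noise_var s2 k N < 1"
    and mlh: "is_ML_est U s2 k N est"
  shows "mse U s2 k N est \<le> (d\<^sup>2 + \<delta>\<^sup>2 + 1) * (2 * D\<^sup>2 / (2 * d * (d - t - r)) + 8 * D\<^sup>2 / \<delta>\<^sup>2)
      * (real N * integral\<^sup>L (density lborel (normal_density 0 (sqrt (noise_var s2 k N)))) (psi t)
       + real k * integral\<^sup>L (density lborel (normal_density 0 (sqrt (noise_var s2 k N)))) (psi r))"
    and "0 \<le> mse U s2 k N est"
proof -
  define v where "v = noise_var s2 k N"
  define M where "M = density lborel (normal_density 0 (sqrt v))"
  define G where "G = gauss_noise v N"
  define Cst where "Cst = (d\<^sup>2 + \<delta>\<^sup>2 + 1) * (2 * D\<^sup>2 / (2 * d * (d - t - r)) + 8 * D\<^sup>2 / \<delta>\<^sup>2)"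
  have Cpos: "Cst \<ge> 0" unfolding Cst_def using dpos t dl by (auto intro!: mult_nonneg_nonneg add_nonneg_nonneg)
  have G: "G = PiM {..<N} (\<lambda>_. M)" unfolding G_def M_def gauss_noise_def ..
  have vv: "0 < v" "4 * v < 1" using v unfolding v_def by auto
  have Mp: "prob_space M" unfolding M_def by (rule prob_space_normal_density) (use vv in simp)
  have pint: "integrable M (psi \<tau>)" if "0 \<le> \<tau>" for \<tau>
    unfolding M_def by (rule psi_bound(1)[of v "1/2"]) (use vv that in auto)
  define \<epsilon> where "\<epsilon> \<tau> = integral\<^sup>L M (psi \<tau>)" for \<tau>
  have \<epsilon>0: "0 \<le> \<epsilon> \<tau>" for \<tau> unfolding \<epsilon>_def by (rule integral_nonneg_AE) (rule AE_I2, rule psi_nonneg)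
  have per_x: "(\<integral>\<omega>. sqnorm N (\<lambda>n. x n - est (\<lambda>i. x i + \<omega> i) n) \<partial>G) \<le> Cst * (real N * \<epsilon> t + real k * \<epsilon> r)"
    if x: "x \<in> Xset U k N" for x
  proof -
    define g where "g \<omega> = Cst * (\<Sum>n<N. psi (if x n = 0 then t else r) (\<omega> n))" for \<omega> :: "nat \<Rightarrow> real"
    have comp: "integrable G (\<lambda>\<omega>. psi \<tau> (\<omega> n))" "integral\<^sup>L G (\<lambda>\<omega>. psi \<tau> (\<omega> n)) = \<epsilon> \<tau>"
      if "n < N" "0 \<le> \<tau>" for n \<tau>
      using comp_integral[OF Mp, of n "{..<N}" "psi \<tau>"] pint[OF that(2)] that unfolding G \<epsilon>_def
      by auto
    have tau: "0 \<le> (if x n = 0 then t else r)" for n using t r by auto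
    have si: "integrable G (\<lambda>\<omega>. \<Sum>n<N. psi (if x n = 0 then t else r) (\<omega> n))"
      by (rule Bochner_Integration.integrable_sum[where I="{..<N}" and f="\<lambda>n \<omega>. psi (if x n = 0 then t else r) (\<omega> n)"])
         (use comp(1) tau in auto)
    have gi: "integrable G g" unfolding g_def
      by (rule integrable_mult_right) (rule si)
    have "integral\<^sup>L G (\<lambda>\<omega>. \<Sum>n<N. psi (if x n = 0 then t else r) (\<omega> n))
        = (\<Sum>n<N. integral\<^sup>L G (\<lambda>\<omega>. psi (if x n = 0 then t else r) (\<omega> n)))"
      by (rule Bochner_Integration.integral_sum[where I="{..<N}" and f="\<lambda>n \<omega>. psi (if x n = 0 then t else r) (\<omega> n)"])
         (use comp(1) tau in auto)
    also have "\<dots> = (\<Sum>n<N. \<epsilon> (if x n = 0 then t else r))"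
      by (rule sum.cong) (use comp(2) tau in auto)
    finally have gI: "integral\<^sup>L G g = Cst * (\<Sum>n<N. \<epsilon> (if x n = 0 then t else r))" unfolding g_def
      by simp
    have sb: "(\<Sum>n<N. \<epsilon> (if x n = 0 then t else r)) \<le> real N * \<epsilon> t + real k * \<epsilon> r"
    proof -
      have "(\<Sum>n<N. \<epsilon> (if x n = 0 then t else r)) \<le> (\<Sum>n<N. \<epsilon> t + (if x n \<noteq> 0 then \<epsilon> r else 0))"
        by (rule sum_mono) (use \<epsilon>0 in auto)
      also have "\<dots> = real N * \<epsilon> t + \<epsilon> r * real (card {n\<in>{..<N}. x n \<noteq> 0})"
        by (simp add: sum.distrib sum_if_card)
      also have "\<dots> = real N * \<epsilon> t + real k * \<epsilon> r" using Xset_card[OF x] by simp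
      finally show ?thesis .
    qed
    have pw: "sqnorm N (\<lambda>n. x n - est (\<lambda>i. x i + \<omega> i) n) \<le> g \<omega>" for \<omega>
    proof -
      define y where "y = (\<lambda>i. x i + \<omega> i)"
      have z: "est y \<in> Xset U k N" and le: "lik v N y x \<le> lik v N y (est y)"
        using mlh x unfolding is_ML_est_def v_def by auto
      have "sqnorm N (\<lambda>n. y n - est y n) \<le> sqnorm N (\<lambda>n. y n - x n)"
        by (rule lik_le_imp[OF vv(1) le])
      hence ml: "(\<Sum>n<N. (x n + \<omega> n - est y n)\<^sup>2) \<le> (\<Sum>n<N. (\<omega> n)\<^sup>2)"
        unfolding sqnorm_def y_def by simp
      have "(\<Sum>n<N. (x n - est y n)\<^sup>2) \<le> g \<omega>"
        unfolding g_def Cst_def by (rule det_bound[OF dpos dU DU dl r t x z ml])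
      thus ?thesis unfolding sqnorm_def y_def .
    qed
    have g0: "0 \<le> integral\<^sup>L G g"
      by (rule integral_nonneg_AE, rule AE_I2) (auto simp: g_def psi_nonneg Cpos intro!: sum_nonneg mult_nonneg_nonneg)
    have "(\<integral>\<omega>. sqnorm N (\<lambda>n. x n - est (\<lambda>i. x i + \<omega> i) n) \<partial>G) \<le> integral\<^sup>L G g"
    proof (cases "integrable G (\<lambda>\<omega>. sqnorm N (\<lambda>n. x n - est (\<lambda>i. x i + \<omega> i) n))")
      case True
      thus ?thesis by (rule integral_mono[OF _ gi pw])
    next
      case False
      thus ?thesis using g0 by (simp add: not_integrable_integral_eq)
    qed
    also have "\<dots> \<le> Cst * (real N * \<epsilon> t + real k * \<epsilon> r)" using gI sb Cpos by (simp add: mult_left_mono)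
    finally show ?thesis .
  qed
  have B0: "0 \<le> Cst * (real N * \<epsilon> t + real k * \<epsilon> r)" using Cpos \<epsilon>0 by simp
  have sumb: "(\<Sum>x\<in>Xset U k N. \<integral>\<omega>. sqnorm N (\<lambda>n. x n - est (\<lambda>i. x i + \<omega> i) n) \<partial>G)
      \<le> real (card (Xset U k N)) * (Cst * (real N * \<epsilon> t + real k * \<epsilon> r))"
    by (rule sum_bounded_above) (rule per_x)
  show "mse U s2 k N est \<le> Cst * (real N * \<epsilon> t + real k * \<epsilon> r)" unfolding Cst_def \<epsilon>_def M_def v_def
  proof -
    have "mse U s2 k N est = (\<Sum>x\<in>Xset U k N. \<integral>\<omega>. sqnorm N (\<lambda>n. x n - est (\<lambda>i. x i + \<omega> i) n) \<partial>G)
        / real (card (Xset U k N))" unfolding mse_def G_def v_def ..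
    also have "\<dots> \<le> Cst * (real N * \<epsilon> t + real k * \<epsilon> r)"
    proof (cases "card (Xset U k N) = 0")
      case True thus ?thesis using B0 by simp
    next
      case False thus ?thesis using sumb by (simp add: divide_le_eq mult.commute)
    qed
    finally show "mse U s2 k N est \<le> (d\<^sup>2 + \<delta>\<^sup>2 + 1) * (2 * D\<^sup>2 / (2 * d * (d - t - r)) + 8 * D\<^sup>2 / \<delta>\<^sup>2)
      * (real N * integral\<^sup>L (density lborel (normal_density 0 (sqrt (noise_var s2 k N)))) (psi t)
       + real k * integral\<^sup>L (density lborel (normal_density 0 (sqrt (noise_var s2 k N)))) (psi r))"
      unfolding Cst_def \<epsilon>_def M_def v_def .
  qed
  show "0 \<le> mse U s2 k N est" unfolding mse_def
    by (intro divide_nonneg_nonneg sum_nonneg integral_nonneg_AE AE_I2) (auto simp: sqnorm_def intro!: sum_nonneg)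
qed



lemma sep_exists:
  fixes U :: "real set"
  assumes "finite U"
  shows "\<exists>\<delta>>0. \<forall>u\<in>U. \<forall>u'\<in>U. u \<noteq> u' \<longrightarrow> \<delta> \<le> \<bar>u - u'\<bar>"
proof -
  define S where "S = insert 1 ((\<lambda>(u, u'). \<bar>u - u'\<bar>) ` {p \<in> U \<times> U. fst p \<noteq> snd p})"
  have fin: "finite S" unfolding S_def using assms by auto
  have pos: "\<forall>s\<in>S. 0 < s" unfolding S_def by auto
  have "Min S > 0" using fin pos by (subst Min_gr_iff) (auto simp: S_def)
  moreover have "\<forall>u\<in>U. \<forall>u'\<in>U. u \<noteq> u' \<longrightarrow> Min S \<le> \<bar>u - u'\<bar>"
  proof (intro ballI impI)
    fix u u' assume "u \<in> U" "u' \<in> U" "u \<noteq> u'"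
    hence "\<bar>u - u'\<bar> \<in> S" unfolding S_def by (auto intro!: image_eqI[of _ _ "(u, u')"])
    thus "Min S \<le> \<bar>u - u'\<bar>" using fin by simp
  qed
  ultimately show ?thesis by blast
qed

lemma exp_neg_lim:
  fixes c :: real assumes "c > 0" and L: "filterlim L at_top F"
  shows "((\<lambda>j. exp (- c * L j)) \<longlongrightarrow> 0) F"
proof -
  have "filterlim (\<lambda>j. c * L j) at_top F"
    by (rule filterlim_tendsto_pos_mult_at_top[OF tendsto_const assms(1) L])
  hence "filterlim (\<lambda>j. - (c * L j)) at_bot F" by (simp add: filterlim_uminus_at_top)
  from filterlim_compose[OF exp_at_bot this] show ?thesis by simp
qed

theorem theorem1:
  fixes U :: "real set" and s2 \<gamma> :: real
    and kk NN :: "nat \<Rightarrow> nat"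
    and est :: "nat \<Rightarrow> (nat \<Rightarrow> real) \<Rightarrow> (nat \<Rightarrow> real)"
  assumes "finite U" and "U \<noteq> {}" and "0 \<notin> U"
    and "s2 > 0"
    and "s2 < (Min (abs ` U))\<^sup>2 / 2"
    and "0 \<le> \<gamma>" and "\<gamma> < 1"
    and "\<And>j. 1 \<le> kk j \<and> kk j < NN j"
    and "filterlim kk at_top sequentially"
    and "filterlim NN at_top sequentially"
    and "(\<lambda>j. ln (real (kk j)) / ln (real (NN j))) \<longlonglongrightarrow> \<gamma>"
    and "\<And>j. is_ML_est U s2 (kk j) (NN j) (est j)"
  shows "(\<lambda>j. mse U s2 (kk j) (NN j) (est j) / real (kk j)) \<longlonglongrightarrow> 0"
proof -
  have s2: "0 < s2" using assms(4) .
  define d where "d = Min (abs ` U)"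
  have fU: "finite (abs ` U)" "abs ` U \<noteq> {}" using assms(1,2) by auto
  have dU: "\<forall>u\<in>U. d \<le> \<bar>u\<bar>" unfolding d_def using fU by auto
  have dpos: "0 < d"
  proof -
    have "d \<in> abs ` U" unfolding d_def using fU by (rule Min_in)
    then obtain u where "u \<in> U" "d = \<bar>u\<bar>" by auto
    thus ?thesis using assms(3) by (cases "u = 0") auto
  qed
  define D where "D = Max (abs ` U)"
  have DU: "\<forall>u\<in>U. \<bar>u\<bar> \<le> D" unfolding D_def using fU by auto
  obtain \<delta> where dl: "0 < \<delta>" "\<forall>u\<in>U. \<forall>u'\<in>U. u \<noteq> u' \<longrightarrow> \<delta> \<le> \<bar>u - u'\<bar>"
    using sep_exists[OF assms(1)] by blast
  have s2d: "2 * s2 < d\<^sup>2" using assms(5) unfolding d_def by simp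
  have sqd: "sqrt (2 * s2) < d"
  proof -
    have "sqrt (2 * s2) < sqrt (d\<^sup>2)" using s2d by (rule real_sqrt_less_mono)
    thus ?thesis using dpos by simp
  qed
  have sqp: "0 < sqrt (2 * s2)" using s2 by simp
  define t where "t = (sqrt (2 * s2) + d) / 2"
  have t: "0 \<le> t" "sqrt (2 * s2) < t" "t < d" using sqd sqp dpos unfolding t_def by auto
  define r where "r = min ((d - t) / 2) (\<delta> / 4)"
  have r: "0 < r" "r \<le> \<delta> / 4" "t + r < d" using t dl(1) unfolding r_def by (auto simp: min_def field_simps)
  have t2: "2 * s2 < t\<^sup>2"
  proof -
    have "(sqrt (2 * s2))\<^sup>2 < t\<^sup>2" using t sqp by (intro power_strict_mono) auto
    thus ?thesis using s2 by simp
  qed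
  define \<theta> where "\<theta> = (2 * s2 / t\<^sup>2 + 1) / 2"
  have tpos: "0 < t\<^sup>2" using t2 s2 by linarith
  have q: "2 * s2 / t\<^sup>2 < 1" using t2 tpos by (simp add: divide_less_eq)
  have q0: "0 < 2 * s2 / t\<^sup>2" using s2 tpos by simp
  have th: "0 < \<theta>" "\<theta> < 1" using q q0 unfolding \<theta>_def by auto
  have tht: "2 * s2 < \<theta> * t\<^sup>2"
  proof -
    have "\<theta> * t\<^sup>2 = (2 * s2 + t\<^sup>2) / 2" unfolding \<theta>_def using tpos by (simp add: field_simps)
    thus ?thesis using t2 by simp
  qed
  define c1 where "c1 = \<theta> * t\<^sup>2 / (2 * s2) - 1"
  have c1: "0 < c1" unfolding c1_def using tht s2 by (simp add: less_divide_eq)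
  define c2 where "c2 = r\<^sup>2 / (4 * s2)"
  have c2: "0 < c2" unfolding c2_def using r s2 by simp
  define Cst where "Cst = (d\<^sup>2 + \<delta>\<^sup>2 + 1) * (2 * D\<^sup>2 / (2 * d * (d - t - r)) + 8 * D\<^sup>2 / \<delta>\<^sup>2)"
  have Cpos: "Cst \<ge> 0" unfolding Cst_def using dpos t r dl by (auto intro!: mult_nonneg_nonneg add_nonneg_nonneg)
  define L where "L j = ln (real (NN j) / real (kk j))" for j
  have kpos: "0 < real (kk j)" for j using assms(8)[of j] by simp
  have kN: "real (kk j) < real (NN j)" for j using assms(8)[of j] by simp
  have Lpos: "0 < L j" for j unfolding L_def using kpos[of j] kN[of j] by simp
  have veq: "noise_var s2 (kk j) (NN j) = s2 / L j" for j unfolding noise_var_def L_def ..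
  have Ltop: "filterlim L at_top sequentially"
  proof -
    have lnN: "filterlim (\<lambda>j. ln (real (NN j))) at_top sequentially"
      by (rule filterlim_compose[OF ln_at_top filterlim_compose[OF filterlim_real_sequentially assms(10)]])
    have "((\<lambda>j. 1 - ln (real (kk j)) / ln (real (NN j))) \<longlongrightarrow> 1 - \<gamma>) sequentially"
      by (intro tendsto_intros assms(11))
    moreover have "0 < 1 - \<gamma>" using assms(7) by simp
    ultimately have "filterlim (\<lambda>j. (1 - ln (real (kk j)) / ln (real (NN j))) * ln (real (NN j))) at_top sequentially"
      using lnN by (rule filterlim_tendsto_pos_mult_at_top)
    moreover have "(\<lambda>j. (1 - ln (real (kk j)) / ln (real (NN j))) * ln (real (NN j))) = L"
    proof
      fix j
      have "1 < real (NN j)" using assms(8)[of j] by simp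
      hence "ln (real (NN j)) \<noteq> 0" by simp
      thus "(1 - ln (real (kk j)) / ln (real (NN j))) * ln (real (NN j)) = L j"
        unfolding L_def using kpos[of j] kN[of j] by (simp add: ln_div field_simps)
    qed
    ultimately show ?thesis by simp
  qed
  define h where "h j = Cst * (exp (- c1 * L j) / sqrt (1 - \<theta> - 2 * (s2 / L j))
      + exp (- c2 * L j) / sqrt (1 - 1 / 2 - 2 * (s2 / L j)))" for j
  have hlim: "h \<longlonglongrightarrow> 0"
  proof -
    have sL: "(\<lambda>j. s2 / L j) \<longlonglongrightarrow> 0"
      by (rule tendsto_divide_0[OF tendsto_const filterlim_at_top_imp_at_infinity[OF Ltop]])
    have "h \<longlonglongrightarrow> Cst * (0 / sqrt (1 - \<theta> - 2 * 0) + 0 / sqrt (1 - 1 / 2 - 2 * 0))"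
      unfolding h_def
      by (intro tendsto_intros exp_neg_lim[OF c1 Ltop] exp_neg_lim[OF c2 Ltop] sL) (use th in auto)
    thus ?thesis by simp
  qed
  have bound: "mse U s2 (kk j) (NN j) (est j) / real (kk j) \<le> h j"
    if Lbig: "max (2 * s2 / (1 - \<theta>)) (4 * s2) < L j" for j
  proof -
    define v where "v = s2 / L j"
    have Lj: "0 < L j" by (rule Lpos)
    have vpos: "0 < v" unfolding v_def using s2 Lj by simp
    have L1: "2 * s2 / (1 - \<theta>) < L j" "4 * s2 < L j" using Lbig by auto
    have v4: "4 * v < 1" unfolding v_def using L1(2) Lj by (simp add: divide_less_eq)
    have vth: "\<theta> + 2 * v < 1"
    proof -
      have "2 * s2 < L j * (1 - \<theta>)" using L1(1) th by (simp add: divide_less_eq)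
      hence "2 * s2 / L j < 1 - \<theta>" using Lj by (simp add: divide_less_eq mult.commute)
      thus ?thesis unfolding v_def by simp
    qed
    define et where "et = integral\<^sup>L (density lborel (normal_density 0 (sqrt v))) (psi t)"
    define er where "er = integral\<^sup>L (density lborel (normal_density 0 (sqrt v))) (psi r)"
    have mb: "mse U s2 (kk j) (NN j) (est j) \<le> Cst * (real (NN j) * et + real (kk j) * er)"
      using mse_bound(1)[OF dpos dU DU dl less_imp_le[OF r(1)] r(2) t(1) r(3), of s2 "kk j" "NN j" "est j"]
        vpos v4 assms(12)[of j] unfolding Cst_def et_def er_def v_def veq by simp
    have e1: "et \<le> exp (- \<theta> * t\<^sup>2 / (2 * v)) / sqrt (1 - \<theta> - 2 * v)"
      unfolding et_def by (rule psi_bound(2)) (use vpos th vth t in auto)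
    have e2: "er \<le> exp (- (1 / 2) * r\<^sup>2 / (2 * v)) / sqrt (1 - 1 / 2 - 2 * v)"
      unfolding er_def by (rule psi_bound(2)) (use vpos v4 r in auto)
    have x1: "(real (NN j) / real (kk j)) * exp (- \<theta> * t\<^sup>2 / (2 * v)) = exp (- c1 * L j)"
    proof -
      have "real (NN j) / real (kk j) = exp (L j)" unfolding L_def using kpos[of j] kN[of j] by simp
      moreover have "L j + (- \<theta> * t\<^sup>2 / (2 * v)) = - c1 * L j"
        unfolding v_def c1_def using s2 Lj by (simp add: field_simps)
      ultimately show ?thesis by (simp flip: exp_add)
    qed
    have x2: "exp (- (1 / 2) * r\<^sup>2 / (2 * v)) = exp (- c2 * L j)"
    proof -
      have "- (1 / 2) * r\<^sup>2 / (2 * v) = - c2 * L j"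
        unfolding v_def c2_def using s2 Lj by (simp add: field_simps)
      thus ?thesis by simp
    qed
    have kp: "0 < real (kk j)" by (rule kpos)
    have "mse U s2 (kk j) (NN j) (est j) / real (kk j) \<le> Cst * (real (NN j) * et + real (kk j) * er) / real (kk j)"
      using mb kp by (simp add: divide_right_mono)
    also have "\<dots> = Cst * ((real (NN j) / real (kk j)) * et + er)"
      using kp by (simp add: field_simps)
    also have "\<dots> \<le> Cst * ((real (NN j) / real (kk j)) * (exp (- \<theta> * t\<^sup>2 / (2 * v)) / sqrt (1 - \<theta> - 2 * v))
        + exp (- (1 / 2) * r\<^sup>2 / (2 * v)) / sqrt (1 - 1 / 2 - 2 * v))"
      using e1 e2 Cpos kp by (intro mult_left_mono add_mono) auto
    also have "\<dots> = h j"
      unfolding h_def x2[symmetric] x1[symmetric] v_def by (simp add: field_simps)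
    finally show ?thesis .
  qed
  have lower: "0 \<le> mse U s2 (kk j) (NN j) (est j) / real (kk j)" for j
  proof -
    have "0 \<le> mse U s2 (kk j) (NN j) (est j)" unfolding mse_def
      by (intro divide_nonneg_nonneg sum_nonneg integral_nonneg_AE AE_I2) (auto simp: sqnorm_def intro!: sum_nonneg)
    thus ?thesis by simp
  qed
  have ev: "eventually (\<lambda>j. max (2 * s2 / (1 - \<theta>)) (4 * s2) < L j) sequentially"
  proof -
    have "\<forall>Z. \<forall>\<^sub>F x in sequentially. Z < L x" using Ltop by (simp add: filterlim_at_top_dense)
    thus ?thesis by blast
  qed
  show ?thesis
    by (rule tendsto_sandwich[of "\<lambda>_. 0" _ sequentially h])
       (use lower ev bound hlim in \<open>auto elim: eventually_mono\<close>)
qed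


end
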